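(* Let $\beta>0$ and $V\in\mathbb R^{d\times d}$ be real symmetric with orthonormal eigenbasis $(e_k)$ and eigenvalues $(\lambda_k)$. Consider, for $x_i(t)\in\mathbb S^{d-1}$, $i\in[n]$, the system \[ \dot x_i=P^\perp_{x_i}\Big(\frac1{Z_i}\sum_{j=1}^n e^{\beta\langle x_i,Vx_j\rangle}Vx_j\Big),\qquad Z_i=\sum_{k=1}^n e^{\beta\langle x_i,Vx_k\rangle},\qquad P^\perp_xy=y-\langle x,y\rangle x. \] Let $s_1,\dots,s_n\in\{-1,1\}$ with $|\{i:s_i=1\}|=|\{i:s_i=-1\}|$, and suppose $x_i(0)=s_iu_0$ for all $i$, for some $u_0\in\mathbb S^{d-1}$. Then there exists $u(t)\in\mathbb S^{d-1}$ with $x_i(t)=s_iu(t)$ for all $t\ge0$ and $i\in[n]$ (i.e. the balanced bipolar manifold $\{X: \exists u\in\mathbb S^{d-1},\ x_i=s_iu\ \forall i\}$, with balanced signs, is invariant), and writing $u(t)=\sum_k u_k(t)e_k$ and $M(t)=\sum_{l=1}^d\lambda_lu_l(t)^2$, one has \[ \dot u_k=u_k\tanh(\beta M)(\lambda_k-M),\qquad k\in[d],\ t\ge0. \] *)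

theory Defs
  imports "HOL-Analysis.Analysis"
begin

definition Pperp :: "real^'d \<Rightarrow> real^'d \<Rightarrow> real^'d" where
  "Pperp x y = y - (x \<bullet> y) *\<^sub>R x"

definition attnZ :: "real \<Rightarrow> real^'d^'d \<Rightarrow> ('n::finite \<Rightarrow> real^'d) \<Rightarrow> 'n \<Rightarrow> real" where
  "attnZ \<beta> V X i = (\<Sum>k\<in>UNIV. exp (\<beta> * (X i \<bullet> (V *v X k))))"

definition attnField :: "real \<Rightarrow> real^'d^'d \<Rightarrow> ('n::finite \<Rightarrow> real^'d) \<Rightarrow> 'n \<Rightarrow> real^'d" where
  "attnField \<beta> V X i =
     Pperp (X i) ((1 / attnZ \<beta> V X i) *\<^sub>R
        (\<Sum>j\<in>UNIV. exp (\<beta> * (X i \<bullet> (V *v X j))) *\<^sub>R (V *v X j)))"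

end

theory Submission
  imports Defs
begin


definition dd :: "('n::finite \<Rightarrow> 'a::real_normed_vector) \<Rightarrow> ('n \<Rightarrow> 'a) \<Rightarrow> real" where
  "dd X Y = (\<Sum>j\<in>UNIV. norm (X j - Y j))"

definition lipb :: "('n::finite \<Rightarrow> 'a::real_normed_vector) set \<Rightarrow> (('n \<Rightarrow> 'a) \<Rightarrow> 'b::real_normed_vector) \<Rightarrow> bool" where
  "lipb K f \<longleftrightarrow> (\<exists>B. \<forall>X\<in>K. norm (f X) \<le> B) \<and> (\<exists>L. \<forall>X\<in>K. \<forall>Y\<in>K. norm (f X - f Y) \<le> L * dd X Y)"

lemma dd_nonneg: "dd X Y \<ge> 0"
  unfolding dd_def by (simp add: sum_nonneg)

lemma lipb_const: "lipb K (\<lambda>X. c)"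
  unfolding lipb_def by (auto intro: exI[of _ 0] simp: dd_nonneg)

lemma lipb_proj:
  assumes "\<And>X. X \<in> K \<Longrightarrow> norm (X j) \<le> 1"
  shows "lipb K (\<lambda>X. X j)"
  unfolding lipb_def
proof (intro conjI exI ballI)
  fix X Y assume "X \<in> K" "Y \<in> K"
  show "norm (X j - Y j) \<le> 1 * dd X Y"
    unfolding dd_def using member_le_sum[of j UNIV "\<lambda>j. norm (X j - Y j)"] by simp
qed (use assms in auto)

lemma lipb_add:
  assumes "lipb K f" "lipb K g"
  shows "lipb K (\<lambda>X. f X + g X)"
proof -
  from assms obtain B1 L1 B2 L2 where
    b1: "\<forall>X\<in>K. norm (f X) \<le> B1" and l1: "\<forall>X\<in>K. \<forall>Y\<in>K. norm (f X - f Y) \<le> L1 * dd X Y" and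
    b2: "\<forall>X\<in>K. norm (g X) \<le> B2" and l2: "\<forall>X\<in>K. \<forall>Y\<in>K. norm (g X - g Y) \<le> L2 * dd X Y"
    unfolding lipb_def by blast
  show ?thesis unfolding lipb_def
  proof (intro conjI exI ballI)
    fix X assume X: "X \<in> K"
    show "norm (f X + g X) \<le> B1 + B2" using b1 b2 X norm_triangle_le by (metis add_mono)
  next
    fix X Y assume X: "X \<in> K" and Y: "Y \<in> K"
    have "norm (f X + g X - (f Y + g Y)) \<le> norm (f X - f Y) + norm (g X - g Y)"
      by (metis add_diff_add norm_triangle_ineq)
    also have "\<dots> \<le> (L1 + L2) * dd X Y" using l1 l2 X Y by (simp add: distrib_right add_mono)
    finally show "norm (f X + g X - (f Y + g Y)) \<le> (L1 + L2) * dd X Y" .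
  qed
qed

lemma lipb_linear:
  assumes "bounded_linear h" "lipb K f"
  shows "lipb K (\<lambda>X. h (f X))"
proof -
  from assms(2) obtain B1 L1 where
    b1: "\<forall>X\<in>K. norm (f X) \<le> B1" and l1: "\<forall>X\<in>K. \<forall>Y\<in>K. norm (f X - f Y) \<le> L1 * dd X Y"
    unfolding lipb_def by blast
  obtain C where C: "\<And>x. norm (h x) \<le> norm x * C" "C > 0"
    using bounded_linear.pos_bounded[OF assms(1)] by blast
  show ?thesis unfolding lipb_def
  proof (intro conjI exI ballI)
    fix X assume X: "X \<in> K"
    show "norm (h (f X)) \<le> B1 * C" using C b1 X
      by (meson dual_order.trans less_le_not_le mult_right_mono)
  next
    fix X Y assume X: "X \<in> K" and Y: "Y \<in> K"
    have "norm (h (f X) - h (f Y)) = norm (h (f X - f Y))"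
      by (simp add: linear_simps assms(1))
    also have "\<dots> \<le> norm (f X - f Y) * C" by (rule C)
    also have "\<dots> \<le> (L1 * dd X Y) * C" using l1 X Y C(2) by (simp add: mult_right_mono)
    finally show "norm (h (f X) - h (f Y)) \<le> (L1 * C) * dd X Y" by (simp add: algebra_simps)
  qed
qed

lemma lipb_bilinear:
  assumes "bounded_bilinear pr" "lipb K f" "lipb K g"
  shows "lipb K (\<lambda>X. pr (f X) (g X))"
proof -
  from assms(2,3) obtain B1 L1 B2 L2 where
    b1: "\<forall>X\<in>K. norm (f X) \<le> B1" and l1: "\<forall>X\<in>K. \<forall>Y\<in>K. norm (f X - f Y) \<le> L1 * dd X Y" and
    b2: "\<forall>X\<in>K. norm (g X) \<le> B2" and l2: "\<forall>X\<in>K. \<forall>Y\<in>K. norm (g X - g Y) \<le> L2 * dd X Y"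
    unfolding lipb_def by blast
  interpret bb: bounded_bilinear pr by fact
  obtain C where C: "\<And>a b. norm (pr a b) \<le> norm a * norm b * C" "C > 0"
    using bb.pos_bounded by blast
  show ?thesis unfolding lipb_def
  proof (intro conjI exI ballI)
    fix X assume X: "X \<in> K"
    have "0 \<le> B1" using b1 X by (meson norm_ge_zero order_trans)
    have "norm (pr (f X) (g X)) \<le> norm (f X) * norm (g X) * C" by (rule C)
    also have "\<dots> \<le> B1 * B2 * C"
      using b1 b2 X C(2) \<open>0 \<le> B1\<close> by (intro mult_right_mono mult_mono) auto
    finally show "norm (pr (f X) (g X)) \<le> B1 * B2 * C" .
  next
    fix X Y assume X: "X \<in> K" and Y: "Y \<in> K"
    have "0 \<le> B1" using b1 X by (meson norm_ge_zero order_trans)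
    have "0 \<le> L1 * dd X Y" using l1 X Y by (meson norm_ge_zero order_trans)
    have "pr (f X) (g X) - pr (f Y) (g Y) = pr (f X) (g X - g Y) + pr (f X - f Y) (g Y)"
      by (simp add: bb.diff_left bb.diff_right)
    hence "norm (pr (f X) (g X) - pr (f Y) (g Y)) \<le> norm (pr (f X) (g X - g Y)) + norm (pr (f X - f Y) (g Y))"
      by (simp add: norm_triangle_ineq)
    also have "\<dots> \<le> norm (f X) * norm (g X - g Y) * C + norm (f X - f Y) * norm (g Y) * C"
      using C by (intro add_mono) auto
    also have "\<dots> \<le> B1 * (L2 * dd X Y) * C + (L1 * dd X Y) * B2 * C"
      using b1 b2 l1 l2 X Y C(2) \<open>0 \<le> B1\<close> \<open>0 \<le> L1 * dd X Y\<close>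
      by (intro add_mono mult_right_mono mult_mono) auto
    finally show "norm (pr (f X) (g X) - pr (f Y) (g Y)) \<le> (B1 * L2 * C + L1 * B2 * C) * dd X Y"
      by (simp add: algebra_simps)
  qed
qed

lemma lipb_sum:
  assumes "finite A" "\<And>a. a \<in> A \<Longrightarrow> lipb K (f a)"
  shows "lipb K (\<lambda>X. \<Sum>a\<in>A. f a X)"
  using assms by (induction A rule: finite_induct) (auto intro: lipb_add lipb_const)

lemma exp_lip_aux:
  fixes a b B :: real
  assumes "a \<le> b" "b \<le> B"
  shows "\<bar>exp a - exp b\<bar> \<le> exp B * \<bar>a - b\<bar>"
proof -
  have "1 + (a - b) \<le> exp (a - b)" by (rule exp_ge_add_one_self)
  hence "exp b * (1 + (a - b)) \<le> exp b * exp (a - b)" by simp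
  hence "exp b - exp a \<le> exp b * (b - a)" by (simp add: exp_diff algebra_simps)
  also have "\<dots> \<le> exp B * (b - a)" using assms by (intro mult_right_mono) auto
  finally show ?thesis using assms by simp
qed

lemma exp_lip:
  fixes a b B :: real
  assumes "\<bar>a\<bar> \<le> B" "\<bar>b\<bar> \<le> B"
  shows "\<bar>exp a - exp b\<bar> \<le> exp B * \<bar>a - b\<bar>"
proof (cases "a \<le> b")
  case True then show ?thesis using exp_lip_aux[of a b B] assms by simp
next
  case False then show ?thesis using exp_lip_aux[of b a B] assms by (simp add: abs_minus_commute)
qed

lemma lipb_exp:
  fixes f :: "('n::finite \<Rightarrow> 'a::real_normed_vector) \<Rightarrow> real"
  assumes "lipb K f"
  shows "lipb K (\<lambda>X. exp (f X))" "\<exists>c>0. \<forall>X\<in>K. exp (f X) \<ge> c"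
proof -
  from assms obtain B1 L1 where
    b1: "\<forall>X\<in>K. norm (f X) \<le> B1" and l1: "\<forall>X\<in>K. \<forall>Y\<in>K. norm (f X - f Y) \<le> L1 * dd X Y"
    unfolding lipb_def by blast
  show "lipb K (\<lambda>X. exp (f X))" unfolding lipb_def
  proof (intro conjI exI ballI)
    fix X assume X: "X \<in> K"
    show "norm (exp (f X)) \<le> exp B1" using b1 X by (simp add: abs_le_iff)
  next
    fix X Y assume X: "X \<in> K" and Y: "Y \<in> K"
    have "\<bar>exp (f X) - exp (f Y)\<bar> \<le> exp B1 * \<bar>f X - f Y\<bar>"
      using b1 X Y by (intro exp_lip) auto
    also have "\<dots> \<le> exp B1 * (L1 * dd X Y)" using l1 X Y by (intro mult_left_mono) auto
    finally show "norm (exp (f X) - exp (f Y)) \<le> (exp B1 * L1) * dd X Y" by simp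
  qed
  show "\<exists>c>0. \<forall>X\<in>K. exp (f X) \<ge> c"
  proof (intro exI conjI ballI)
    fix X assume X: "X \<in> K"
    have "- B1 \<le> f X" using b1 X by auto
    thus "exp (- B1) \<le> exp (f X)" by simp
  qed simp
qed

lemma lipb_inverse:
  fixes f :: "('n::finite \<Rightarrow> 'a::real_normed_vector) \<Rightarrow> real"
  assumes "lipb K f" "c > 0" "\<And>X. X \<in> K \<Longrightarrow> f X \<ge> c"
  shows "lipb K (\<lambda>X. 1 / f X)"
proof -
  from assms obtain B1 L1 where
    l1: "\<forall>X\<in>K. \<forall>Y\<in>K. norm (f X - f Y) \<le> L1 * dd X Y"
    unfolding lipb_def by blast
  show ?thesis unfolding lipb_def
  proof (intro conjI exI ballI)
    fix X assume X: "X \<in> K"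
    have "f X \<ge> c" using assms X by auto
    thus "norm (1 / f X) \<le> 1 / c" using assms(2) by (simp add: frac_le)
  next
    fix X Y assume X: "X \<in> K" and Y: "Y \<in> K"
    have fx: "f X \<ge> c" and fy: "f Y \<ge> c" using assms X Y by auto
    have "1 / f X - 1 / f Y = (f Y - f X) / (f X * f Y)" using fx fy assms(2) by (simp add: field_simps)
    hence "\<bar>1 / f X - 1 / f Y\<bar> = \<bar>f X - f Y\<bar> / (f X * f Y)" using fx fy assms(2)
      by (simp add: abs_minus_commute)
    also have "\<dots> \<le> \<bar>f X - f Y\<bar> / (c * c)" using fx fy assms(2)
      by (intro divide_left_mono mult_mono) auto
    also have "\<dots> \<le> (L1 * dd X Y) / (c * c)" using l1 X Y by (intro divide_right_mono) auto
    finally show "norm (1 / f X - 1 / f Y) \<le> (L1 / (c * c)) * dd X Y" by simp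
  qed
qed

lemma lipb_diff:
  assumes "lipb K f" "lipb K g"
  shows "lipb K (\<lambda>X. f X - g X)"
proof -
  have "lipb K (\<lambda>X. - g X)"
    using lipb_linear[OF bounded_linear_minus[OF bounded_linear_ident] assms(2)] .
  from lipb_add[OF assms(1) this] show ?thesis by simp
qed

lemma field_lipb:
  fixes \<beta> :: real and V :: "real^'d^'d"
  defines "K \<equiv> {X :: 'n::finite \<Rightarrow> real^'d. \<forall>j. norm (X j) = 1}"
  shows "lipb K (\<lambda>X. attnField \<beta> V X i)"
proof -
  have P: "lipb K (\<lambda>X. X j)" for j by (rule lipb_proj) (auto simp: K_def)
  have VP: "lipb K (\<lambda>X. V *v X j)" for j by (rule lipb_linear[OF _ P]) simp
  have A: "lipb K (\<lambda>X. \<beta> * (X i \<bullet> (V *v X j)))" for j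
    by (rule lipb_bilinear[OF bounded_bilinear_mult lipb_const lipb_bilinear[OF bounded_bilinear_inner P VP]])
  have W: "lipb K (\<lambda>X. exp (\<beta> * (X i \<bullet> (V *v X j))))" for j using lipb_exp(1)[OF A] .
  obtain c where c: "c > 0" "\<And>X. X \<in> K \<Longrightarrow> exp (\<beta> * (X i \<bullet> (V *v X i))) \<ge> c"
    using lipb_exp(2)[OF A[of i]] by blast
  have Z: "lipb K (\<lambda>X. attnZ \<beta> V X i)" unfolding attnZ_def
    by (rule lipb_sum) (auto intro: W)
  have Zc: "attnZ \<beta> V X i \<ge> c" if "X \<in> K" for X
  proof -
    have "c \<le> exp (\<beta> * (X i \<bullet> (V *v X i)))" using c that by auto
    also have "\<dots> \<le> attnZ \<beta> V X i" unfolding attnZ_def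
      by (rule member_le_sum) auto
    finally show ?thesis .
  qed
  have IZ: "lipb K (\<lambda>X. 1 / attnZ \<beta> V X i)" by (rule lipb_inverse[OF Z c(1) Zc])
  have S: "lipb K (\<lambda>X. \<Sum>j\<in>UNIV. exp (\<beta> * (X i \<bullet> (V *v X j))) *\<^sub>R (V *v X j))"
    by (rule lipb_sum) (auto intro: lipb_bilinear[OF bounded_bilinear_scaleR W VP])
  have v: "lipb K (\<lambda>X. (1 / attnZ \<beta> V X i) *\<^sub>R (\<Sum>j\<in>UNIV. exp (\<beta> * (X i \<bullet> (V *v X j))) *\<^sub>R (V *v X j)))"
    by (rule lipb_bilinear[OF bounded_bilinear_scaleR IZ S])
  show ?thesis unfolding attnField_def Pperp_def
    by (rule lipb_diff[OF v lipb_bilinear[OF bounded_bilinear_scaleR lipb_bilinear[OF bounded_bilinear_inner P v] P]])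
qed

lemma field_lip:
  fixes \<beta> :: real and V :: "real^'d^'d"
  shows "\<exists>L. \<forall>X Y :: 'n::finite \<Rightarrow> real^'d. (\<forall>j. norm (X j) = 1) \<longrightarrow> (\<forall>j. norm (Y j) = 1) \<longrightarrow>
      (\<forall>i. norm (attnField \<beta> V X i - attnField \<beta> V Y i) \<le> L * dd X Y)"
proof -
  have "\<forall>i. \<exists>L. \<forall>X \<in> {X :: 'n \<Rightarrow> real^'d. \<forall>j. norm (X j) = 1}. \<forall>Y \<in> {X. \<forall>j. norm (X j) = 1}.
      norm (attnField \<beta> V X i - attnField \<beta> V Y i) \<le> L * dd X Y"
    using field_lipb[of \<beta> V] unfolding lipb_def by blast
  then obtain L :: "'n \<Rightarrow> real" where L: "\<And>i X Y. (\<forall>j. norm (X j) = 1) \<Longrightarrow> (\<forall>j. norm (Y j) = 1) \<Longrightarrow>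
      norm (attnField \<beta> V X i - attnField \<beta> V Y i) \<le> L i * dd X Y"
    by (auto simp: choice_iff) blast
  show ?thesis
  proof (intro exI allI impI)
    fix X Y :: "'n \<Rightarrow> real^'d" and i
    assume X: "\<forall>j. norm (X j) = 1" and Y: "\<forall>j. norm (Y j) = 1"
    have "norm (attnField \<beta> V X i - attnField \<beta> V Y i) \<le> L i * dd X Y" by (rule L[OF X Y])
    also have "\<dots> \<le> (\<Sum>k\<in>UNIV. \<bar>L k\<bar>) * dd X Y"
    proof (intro mult_right_mono dd_nonneg)
      show "L i \<le> (\<Sum>k\<in>UNIV. \<bar>L k\<bar>)"
        using abs_ge_self[of "L i"] member_le_sum[of i UNIV "\<lambda>k. \<bar>L k\<bar>"] by simp
    qed
    finally show "norm (attnField \<beta> V X i - attnField \<beta> V Y i) \<le> (\<Sum>k\<in>UNIV. \<bar>L k\<bar>) * dd X Y" .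
  qed
qed

lemma gronwall_zero:
  fixes g :: "real \<Rightarrow> real"
  assumes dg: "\<And>t. t \<ge> 0 \<Longrightarrow> (g has_real_derivative g' t) (at t within {0..})"
    and g'le: "\<And>t. t \<ge> 0 \<Longrightarrow> g' t \<le> c * g t"
    and g0: "g 0 = 0" and gnn: "\<And>t. t \<ge> 0 \<Longrightarrow> g t \<ge> 0"
    and t: "t \<ge> 0"
  shows "g t = 0"
proof -
  define h where "h t = exp (- c * t) * g t" for t
  have dh: "(h has_real_derivative exp (- c * t) * (g' t - c * g t)) (at t within {0..})" if "t \<ge> 0" for t
    unfolding h_def
    by (rule derivative_eq_intros dg[OF that] refl | simp)+ (simp add: algebra_simps)
  have cont: "continuous_on {0..t} h"
  proof -
    have "continuous_on {0..} h"
      unfolding continuous_on_eq_continuous_within using dh DERIV_continuous by fastforce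
    thus ?thesis by (rule continuous_on_subset) auto
  qed
  have "h t \<le> h 0"
  proof (rule DERIV_nonpos_imp_decreasing_open[OF t _ cont])
    fix z assume z: "0 < z" "z < t"
    have "(h has_real_derivative exp (- c * z) * (g' z - c * g z)) (at z within {0<..})"
      by (rule DERIV_subset[OF dh]) (use z in auto)
    hence "(h has_real_derivative exp (- c * z) * (g' z - c * g z)) (at z)"
      using at_within_open[of z "{0<..}"] z by simp
    moreover have "exp (- c * z) * (g' z - c * g z) \<le> 0"
      using g'le[of z] z by (intro mult_nonneg_nonpos) auto
    ultimately show "\<exists>y. (h has_real_derivative y) (at z) \<and> y \<le> 0" by blast
  qed
  hence "exp (- c * t) * g t \<le> 0" using g0 by (simp add: h_def)
  hence "g t \<le> 0" by (simp add: mult_le_0_iff)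
  with gnn[OF t] show ?thesis by simp
qed

lemma ode_unique:
  fixes X Y :: "real \<Rightarrow> 'n::finite \<Rightarrow> real^'d" and \<beta> :: real and V :: "real^'d^'d"
  assumes nX: "\<And>t j. t \<ge> 0 \<Longrightarrow> norm (X t j) = 1"
    and nY: "\<And>t j. t \<ge> 0 \<Longrightarrow> norm (Y t j) = 1"
    and dX: "\<And>t i. t \<ge> 0 \<Longrightarrow> ((\<lambda>\<tau>. X \<tau> i) has_vector_derivative attnField \<beta> V (X t) i) (at t within {0..})"
    and dY: "\<And>t i. t \<ge> 0 \<Longrightarrow> ((\<lambda>\<tau>. Y \<tau> i) has_vector_derivative attnField \<beta> V (Y t) i) (at t within {0..})"
    and init: "X 0 = Y 0"
    and t: "t \<ge> 0"
  shows "X t = Y t"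
proof -
  obtain L where L: "\<And>X Y :: 'n \<Rightarrow> real^'d. (\<forall>j. norm (X j) = 1) \<Longrightarrow> (\<forall>j. norm (Y j) = 1) \<Longrightarrow>
      norm (attnField \<beta> V X i - attnField \<beta> V Y i) \<le> L * dd X Y" for i
    using field_lip[of \<beta> V] by blast
  define n where "n = real CARD('n)"
  define D where "D t = (\<Sum>i\<in>UNIV. (X t i - Y t i) \<bullet> (X t i - Y t i))" for t
  define D' where "D' t = (\<Sum>i\<in>UNIV. 2 * ((X t i - Y t i) \<bullet> (attnField \<beta> V (X t) i - attnField \<beta> V (Y t) i)))" for t
  have dD: "(D has_real_derivative D' t) (at t within {0..})" if "t \<ge> 0" for t
    unfolding D_def D'_def
  proof (rule DERIV_sum)
    fix i :: 'n
    have dd: "((\<lambda>\<tau>. X \<tau> i - Y \<tau> i) has_vector_derivative (attnField \<beta> V (X t) i - attnField \<beta> V (Y t) i)) (at t within {0..})"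
      by (rule has_vector_derivative_diff[OF dX[OF that] dY[OF that]])
    have "((\<lambda>\<tau>. (X \<tau> i - Y \<tau> i) \<bullet> (X \<tau> i - Y \<tau> i)) has_vector_derivative
       ((X t i - Y t i) \<bullet> (attnField \<beta> V (X t) i - attnField \<beta> V (Y t) i) + (attnField \<beta> V (X t) i - attnField \<beta> V (Y t) i) \<bullet> (X t i - Y t i))) (at t within {0..})"
      by (rule bounded_bilinear.has_vector_derivative[OF bounded_bilinear_inner dd dd])
    thus "((\<lambda>\<tau>. (X \<tau> i - Y \<tau> i) \<bullet> (X \<tau> i - Y \<tau> i)) has_real_derivative
       2 * ((X t i - Y t i) \<bullet> (attnField \<beta> V (X t) i - attnField \<beta> V (Y t) i))) (at t within {0..})"
      by (simp add: has_real_derivative_iff_has_vector_derivative inner_commute)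
  qed
  have bound: "D' t \<le> (2 * \<bar>L\<bar> * n * n) * D t" if "t \<ge> 0" for t
  proof -
    let ?a = "\<lambda>i. X t i - Y t i"
    have Dnn: "D t \<ge> 0" unfolding D_def by (simp add: sum_nonneg)
    have ai: "norm (?a i) \<le> sqrt (D t)" for i
    proof (rule real_le_rsqrt)
      have "(norm (?a i))^2 = ?a i \<bullet> ?a i" by (simp add: power2_norm_eq_inner)
      also have "\<dots> \<le> D t" unfolding D_def by (rule member_le_sum) auto
      finally show "(norm (?a i))^2 \<le> D t" .
    qed
    have dds: "dd (X t) (Y t) \<le> n * sqrt (D t)"
      unfolding dd_def n_def using sum_mono[of UNIV "\<lambda>i. norm (?a i)" "\<lambda>i. sqrt (D t)", OF ai] by simp
    have ddnn: "dd (X t) (Y t) \<ge> 0" by (rule dd_nonneg)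
    have tm: "2 * (?a i \<bullet> (attnField \<beta> V (X t) i - attnField \<beta> V (Y t) i)) \<le> 2 * (sqrt (D t) * (\<bar>L\<bar> * (n * sqrt (D t))))" for i
    proof -
      have "?a i \<bullet> (attnField \<beta> V (X t) i - attnField \<beta> V (Y t) i) \<le> norm (?a i) * norm (attnField \<beta> V (X t) i - attnField \<beta> V (Y t) i)"
        by (rule norm_cauchy_schwarz)
      also have "\<dots> \<le> sqrt (D t) * (\<bar>L\<bar> * (n * sqrt (D t)))"
      proof (rule mult_mono[OF ai])
        have "norm (attnField \<beta> V (X t) i - attnField \<beta> V (Y t) i) \<le> L * dd (X t) (Y t)"
          using L nX nY that by auto
        also have "\<dots> \<le> \<bar>L\<bar> * dd (X t) (Y t)" using ddnn by (intro mult_right_mono) auto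
        also have "\<dots> \<le> \<bar>L\<bar> * (n * sqrt (D t))" using dds by (intro mult_left_mono) auto
        finally show "norm (attnField \<beta> V (X t) i - attnField \<beta> V (Y t) i) \<le> \<bar>L\<bar> * (n * sqrt (D t))" .
      qed (use Dnn in auto)
      finally show ?thesis by simp
    qed
    have "D' t \<le> (\<Sum>i\<in>(UNIV::'n set). 2 * (sqrt (D t) * (\<bar>L\<bar> * (n * sqrt (D t)))))"
      unfolding D'_def by (rule sum_mono) (rule tm)
    also have "\<dots> = n * (2 * (sqrt (D t) * (\<bar>L\<bar> * (n * sqrt (D t)))))" by (simp add: n_def)
    also have "\<dots> = (2 * \<bar>L\<bar> * n * n) * (sqrt (D t) * sqrt (D t))" by (simp add: algebra_simps)
    also have "\<dots> = (2 * \<bar>L\<bar> * n * n) * D t" using Dnn by simp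
    finally show ?thesis .
  qed
  have D0: "D 0 = 0" unfolding D_def using init by simp
  have Dnn: "D t \<ge> 0" for t unfolding D_def by (simp add: sum_nonneg)
  have "D t = 0" by (rule gronwall_zero[OF dD bound D0 Dnn t])
  hence "\<forall>i\<in>UNIV. (X t i - Y t i) \<bullet> (X t i - Y t i) = 0"
    unfolding D_def by (subst (asm) sum_nonneg_eq_0_iff) auto
  thus ?thesis by (auto simp: fun_eq_iff)
qed

lemma matvec_scaleR: "(V::real^'d^'d) *v (c *\<^sub>R b) = c *\<^sub>R (V *v b)"
  by (rule matrix_vector_mult_scaleR)

lemma field_sym:
  fixes X :: "'n::finite \<Rightarrow> real^'d" and V :: "real^'d^'d"
  assumes c: "c * c = 1" and r: "bij \<rho>"
  shows "attnField \<beta> V (\<lambda>j. c *\<^sub>R X (\<rho> j)) i = c *\<^sub>R attnField \<beta> V X (\<rho> i)"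
proof -
  have ip: "(c *\<^sub>R a) \<bullet> (V *v (c *\<^sub>R b)) = a \<bullet> (V *v b)" for a b :: "real^'d"
    by (simp add: matvec_scaleR c mult.assoc[symmetric])
  have Z: "attnZ \<beta> V (\<lambda>j. c *\<^sub>R X (\<rho> j)) i = attnZ \<beta> V X (\<rho> i)"
    unfolding attnZ_def ip
    using sum.reindex_bij_betw[OF r, of "\<lambda>k. exp (\<beta> * (X (\<rho> i) \<bullet> (V *v X k)))"] by simp
  have S: "(\<Sum>j\<in>UNIV. exp (\<beta> * ((c *\<^sub>R X (\<rho> i)) \<bullet> (V *v (c *\<^sub>R X (\<rho> j))))) *\<^sub>R (V *v (c *\<^sub>R X (\<rho> j))))
     = c *\<^sub>R (\<Sum>j\<in>UNIV. exp (\<beta> * (X (\<rho> i) \<bullet> (V *v X j))) *\<^sub>R (V *v X j))"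
  proof -
    have "(\<Sum>j\<in>UNIV. exp (\<beta> * ((c *\<^sub>R X (\<rho> i)) \<bullet> (V *v (c *\<^sub>R X (\<rho> j))))) *\<^sub>R (V *v (c *\<^sub>R X (\<rho> j))))
       = c *\<^sub>R (\<Sum>j\<in>UNIV. exp (\<beta> * (X (\<rho> i) \<bullet> (V *v X (\<rho> j)))) *\<^sub>R (V *v X (\<rho> j)))"
      unfolding ip by (simp add: matvec_scaleR scaleR_sum_right mult.commute)
    also have "(\<Sum>j\<in>UNIV. exp (\<beta> * (X (\<rho> i) \<bullet> (V *v X (\<rho> j)))) *\<^sub>R (V *v X (\<rho> j)))
       = (\<Sum>j\<in>UNIV. exp (\<beta> * (X (\<rho> i) \<bullet> (V *v X j))) *\<^sub>R (V *v X j))"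
      using sum.reindex_bij_betw[OF r, of "\<lambda>j. exp (\<beta> * (X (\<rho> i) \<bullet> (V *v X j))) *\<^sub>R (V *v X j)"] by simp
    finally show ?thesis .
  qed
  show ?thesis
    unfolding attnField_def Z S Pperp_def
    by (simp add: algebra_simps c mult.assoc[symmetric])
qed

lemma basis_expand:
  fixes e :: "'d::finite \<Rightarrow> real^'d"
  assumes e: "\<And>k l. e k \<bullet> e l = (if k = l then 1 else 0)"
  shows "u = (\<Sum>l\<in>UNIV. (u \<bullet> e l) *\<^sub>R e l)"
proof -
  have inj: "inj e"
  proof (rule injI)
    fix k l assume "e k = e l"
    hence "e k \<bullet> e l = 1" using e[of l l] by simp
    thus "k = l" using e[of k l] by (auto split: if_splits)
  qed
  have ind: "independent (range e)"
  proof (rule pairwise_orthogonal_independent)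
    show "pairwise orthogonal (range e)"
      unfolding pairwise_def orthogonal_def using e by auto
    show "0 \<notin> range e" using e by (metis (full_types) inner_zero_left imageE zero_neq_one)
  qed
  have "card (range e) = dim (UNIV :: (real^'d) set)"
    using card_image[OF inj] by simp
  hence sp: "UNIV \<subseteq> span (range e)"
    using card_eq_dim[of "range e" UNIV] ind by simp
  define w where "w = u - (\<Sum>l\<in>UNIV. (u \<bullet> e l) *\<^sub>R e l)"
  have we: "w \<bullet> e k = 0" for k
  proof -
    have "(\<Sum>l\<in>UNIV. (u \<bullet> e l) *\<^sub>R e l) \<bullet> e k = (\<Sum>l\<in>UNIV. (u \<bullet> e l) * (e l \<bullet> e k))"
      by (simp add: inner_sum_left)
    also have "\<dots> = (\<Sum>l\<in>UNIV. if l = k then u \<bullet> e k else 0)"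
      by (rule sum.cong) (auto simp: e)
    also have "\<dots> = u \<bullet> e k" by simp
    finally show ?thesis unfolding w_def by (simp add: inner_diff_left)
  qed
  have "orthogonal w w"
    by (rule orthogonal_to_span[of w "range e"]) (use sp we in \<open>auto simp: orthogonal_def\<close>)
  hence "w = 0" by (simp add: orthogonal_def)
  thus ?thesis unfolding w_def by simp
qed



lemma sym_consequence:
  fixes x :: "real \<Rightarrow> 'n::finite \<Rightarrow> real^'d" and V :: "real^'d^'d" and s :: "'n \<Rightarrow> real"
  assumes x_sphere: "\<And>t i. t \<ge> 0 \<Longrightarrow> norm (x t i) = 1"
    and x_ode: "\<And>t i. t \<ge> 0 \<Longrightarrow>
        ((\<lambda>\<tau>. x \<tau> i) has_vector_derivative attnField \<beta> V (x t) i) (at t within {0..})"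
    and x_init: "\<And>i. x 0 i = s i *\<^sub>R u0"
    and r: "bij \<rho>" and c: "c \<in> {-1, 1}" and sr: "\<And>i. s (\<rho> i) = c * s i"
    and t: "t \<ge> 0"
  shows "x t i = c *\<^sub>R x t (\<rho> i)"
proof -
  have cc: "c * c = 1" using c by auto
  have ac: "\<bar>c\<bar> = 1" using c by auto
  define Y where "Y = (\<lambda>t j. c *\<^sub>R x t (\<rho> j))"
  have nY: "norm (Y t j) = 1" if "t \<ge> 0" for t j
    unfolding Y_def using x_sphere[OF that, of "\<rho> j"] ac by simp
  have dY: "((\<lambda>\<tau>. Y \<tau> i) has_vector_derivative attnField \<beta> V (Y t) i) (at t within {0..})"
      if "t \<ge> 0" for t i
  proof -
    have "((\<lambda>\<tau>. c *\<^sub>R x \<tau> (\<rho> i)) has_vector_derivative c *\<^sub>R attnField \<beta> V (x t) (\<rho> i)) (at t within {0..})"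
      by (rule bounded_linear.has_vector_derivative[OF bounded_linear_scaleR_right x_ode[OF that]])
    moreover have "attnField \<beta> V (Y t) i = c *\<^sub>R attnField \<beta> V (x t) (\<rho> i)"
      unfolding Y_def by (rule field_sym[OF cc r])
    ultimately show ?thesis unfolding Y_def by simp
  qed
  have i0: "x 0 = Y 0"
  proof
    fix j
    have "Y 0 j = (c * c * s j) *\<^sub>R u0" unfolding Y_def x_init sr by simp
    thus "x 0 j = Y 0 j" unfolding x_init cc by simp
  qed
  have "x t = Y t" by (rule ode_unique[where X=x and Y=Y and \<beta>=\<beta> and V=V, OF x_sphere nY x_ode dY i0 t])
  hence "x t i = Y t i" by simp
  thus ?thesis by (simp only: Y_def)
qed

lemma sign_sum:
  fixes s :: "'n::finite \<Rightarrow> real" and f :: "real \<Rightarrow> 'a::real_vector"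
  assumes s_signs: "\<And>i. s i \<in> {-1, 1}"
  shows "(\<Sum>k\<in>UNIV. f (s k)) = real (card {i. s i = 1}) *\<^sub>R f 1 + real (card {i. s i = -1}) *\<^sub>R f (-1)"
proof -
  have U: "UNIV = {i. s i = 1} \<union> {i. s i = -1}" using s_signs by auto
  have "(\<Sum>k\<in>UNIV. f (s k)) = (\<Sum>k\<in>{i. s i = 1}. f (s k)) + (\<Sum>k\<in>{i. s i = -1}. f (s k))"
    by (subst U, rule sum.union_disjoint) auto
  also have "(\<Sum>k\<in>{i. s i = 1}. f (s k)) = (\<Sum>k\<in>{i. s i = 1}. f 1)" by (rule sum.cong) auto
  also have "(\<Sum>k\<in>{i. s i = -1}. f (s k)) = (\<Sum>k\<in>{i. s i = -1}. f (-1))" by (rule sum.cong) auto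
  finally show ?thesis by (simp add: sum_constant_scaleR)
qed

lemma Vsym_inner:
  fixes V :: "real^'d^'d"
  assumes "transpose V = V"
  shows "(V *v u) \<bullet> w = u \<bullet> (V *v w)"
proof -
  have "V *v u = u v* V" using transpose_matrix_vector[of V u] assms by simp
  thus ?thesis by (simp add: dot_lmul_matrix)
qed

lemma field_bipolar:
  fixes s :: "'n::finite \<Rightarrow> real" and V :: "real^'d^'d" and u :: "real^'d"
  assumes s_signs: "\<And>i. s i \<in> {-1, 1}"
    and s_balanced: "card {i. s i = 1} = card {i. s i = -1}"
    and sq: "s q = 1" and nu: "norm u = 1"
  defines "M \<equiv> u \<bullet> (V *v u)"
  shows "attnField \<beta> V (\<lambda>j. s j *\<^sub>R u) q = tanh (\<beta> * M) *\<^sub>R (V *v u - M *\<^sub>R u)"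
proof -
  define m where "m = real (card {i. s i = 1})"
  have m: "m > 0"
  proof -
    have "{i. s i = 1} \<noteq> {}" using sq by auto
    thus ?thesis unfolding m_def by (simp add: card_gt_0_iff)
  qed
  have ip: "(s q *\<^sub>R u) \<bullet> (V *v (s j *\<^sub>R u)) = s j * M" for j
    using sq by (simp add: matrix_vector_mult_scaleR M_def)
  have Z: "attnZ \<beta> V (\<lambda>j. s j *\<^sub>R u) q = m * (exp (\<beta> * M) + exp (- (\<beta> * M)))"
    unfolding attnZ_def ip
    using sign_sum[of s, OF s_signs, of "\<lambda>a. exp (\<beta> * (a * M))"] s_balanced
    by (simp add: m_def algebra_simps)
  have S: "(\<Sum>j\<in>UNIV. exp (\<beta> * ((s q *\<^sub>R u) \<bullet> (V *v (s j *\<^sub>R u)))) *\<^sub>R (V *v (s j *\<^sub>R u)))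
      = (m * (exp (\<beta> * M) - exp (- (\<beta> * M)))) *\<^sub>R (V *v u)"
    unfolding ip unfolding matrix_vector_mult_scaleR
    using sign_sum[of s, OF s_signs, of "\<lambda>a. exp (\<beta> * (a * M)) *\<^sub>R (a *\<^sub>R (V *v u))"] s_balanced
    by (simp add: m_def algebra_simps)
  have T: "(1 / (m * (exp (\<beta> * M) + exp (- (\<beta> * M))))) * (m * (exp (\<beta> * M) - exp (- (\<beta> * M)))) = tanh (\<beta> * M)"
  proof -
    have pos: "exp (\<beta> * M) + exp (- (\<beta> * M)) > 0" by (simp add: add_pos_pos)
    have gen: "(1 / (m * (a + b))) * (m * (a - b)) = (a - b) / (a + b)" if "a + b > 0" for a b :: real
    proof -
      have "(1 / (m * (a + b))) * (m * (a - b)) = (m * (a - b)) / (m * (a + b))" by simp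
      also have "\<dots> = (a - b) / (a + b)" using m by simp
      finally show ?thesis .
    qed
    have th: "tanh (\<beta> * M) = (exp (\<beta> * M) - exp (- (\<beta> * M))) / (exp (\<beta> * M) + exp (- (\<beta> * M)))"
    proof -
      have p: "exp (\<beta> * M) + exp (- (\<beta> * M)) > 0" by (simp add: add_pos_pos)
      have "tanh (\<beta> * M) = ((exp (\<beta> * M) - exp (- (\<beta> * M))) / 2) / ((exp (\<beta> * M) + exp (- (\<beta> * M))) / 2)"
        unfolding tanh_def sinh_def cosh_def by simp
      also have "\<dots> = (exp (\<beta> * M) - exp (- (\<beta> * M))) / (exp (\<beta> * M) + exp (- (\<beta> * M)))"
        using p by (simp add: field_simps)
      finally show ?thesis .
    qed
    show ?thesis unfolding th by (rule gen[OF pos])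
  qed
  have uu: "u \<bullet> u = 1" using nu by (simp add: norm_eq_1)
  have "attnField \<beta> V (\<lambda>j. s j *\<^sub>R u) q = Pperp (s q *\<^sub>R u) ((1 / attnZ \<beta> V (\<lambda>j. s j *\<^sub>R u) q) *\<^sub>R
      (\<Sum>j\<in>UNIV. exp (\<beta> * ((s q *\<^sub>R u) \<bullet> (V *v (s j *\<^sub>R u)))) *\<^sub>R (V *v (s j *\<^sub>R u))))"
    unfolding attnField_def by (rule refl)
  also have "\<dots> = Pperp u (tanh (\<beta> * M) *\<^sub>R (V *v u))"
    unfolding Z S scaleR_scaleR T by (simp add: sq)
  also have "\<dots> = tanh (\<beta> * M) *\<^sub>R (V *v u - M *\<^sub>R u)"
    unfolding Pperp_def M_def by (simp add: algebra_simps)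
  finally show ?thesis .
qed

lemma M_expand:
  fixes V :: "real^'d^'d" and e :: "'d::finite \<Rightarrow> real^'d"
  assumes V_sym: "transpose V = V"
    and e_orthonormal: "\<And>k l. e k \<bullet> e l = (if k = l then 1 else 0)"
    and e_eigen: "\<And>k. V *v e k = lam k *\<^sub>R e k"
  shows "(V *v u) \<bullet> e k = lam k * (u \<bullet> e k)"
    and "u \<bullet> (V *v u) = (\<Sum>l\<in>UNIV. lam l * (u \<bullet> e l)^2)"
proof -
  show ve: "(V *v u) \<bullet> e k = lam k * (u \<bullet> e k)" for k
    unfolding Vsym_inner[OF V_sym] e_eigen by simp
  have "u \<bullet> (V *v u) = (\<Sum>l\<in>UNIV. (u \<bullet> e l) *\<^sub>R e l) \<bullet> (V *v u)"
    by (subst basis_expand[OF e_orthonormal, of u]) (rule refl)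
  also have "\<dots> = (\<Sum>l\<in>UNIV. (u \<bullet> e l) * (e l \<bullet> (V *v u)))"
    by (simp add: inner_sum_left)
  also have "\<dots> = (\<Sum>l\<in>UNIV. (u \<bullet> e l) * ((V *v u) \<bullet> e l))"
    by (simp add: inner_commute)
  also have "\<dots> = (\<Sum>l\<in>UNIV. lam l * (u \<bullet> e l)^2)"
    by (rule sum.cong) (auto simp: ve power2_eq_square)
  finally show "u \<bullet> (V *v u) = (\<Sum>l\<in>UNIV. lam l * (u \<bullet> e l)^2)" .
qed

theorem proposition4p3:
  fixes \<beta> :: real
    and V :: "real^'d^'d"
    and e :: "'d \<Rightarrow> real^'d"
    and lam :: "'d \<Rightarrow> real"
    and x :: "real \<Rightarrow> 'n::finite \<Rightarrow> real^'d"
    and s :: "'n \<Rightarrow> real"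
    and u0 :: "real^'d"
  assumes beta_pos: "\<beta> > 0"
    and V_sym: "transpose V = V"
    and e_orthonormal: "\<And>k l. e k \<bullet> e l = (if k = l then 1 else 0)"
    and e_eigen: "\<And>k. V *v e k = lam k *\<^sub>R e k"
    and s_signs: "\<And>i. s i \<in> {-1, 1}"
    and s_balanced: "card {i. s i = 1} = card {i. s i = -1}"
    and u0_sphere: "norm u0 = 1"
    and x_sphere: "\<And>t i. t \<ge> 0 \<Longrightarrow> norm (x t i) = 1"
    and x_ode: "\<And>t i. t \<ge> 0 \<Longrightarrow>
        ((\<lambda>\<tau>. x \<tau> i) has_vector_derivative attnField \<beta> V (x t) i) (at t within {0..})"
    and x_init: "\<And>i. x 0 i = s i *\<^sub>R u0"
  shows "\<exists>u :: real \<Rightarrow> real^'d.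
           (\<forall>t\<ge>0. norm (u t) = 1 \<and> (\<forall>i. x t i = s i *\<^sub>R u t)) \<and>
           (\<forall>k. \<forall>t\<ge>0.
              ((\<lambda>\<tau>. u \<tau> \<bullet> e k) has_real_derivative
                 (u t \<bullet> e k) * tanh (\<beta> * (\<Sum>l\<in>UNIV. lam l * (u t \<bullet> e l)^2))
                   * (lam k - (\<Sum>l\<in>UNIV. lam l * (u t \<bullet> e l)^2)))
              (at t within {0..}))"
proof -
  have c1: "(1::real) \<in> {-1, 1}" and cm1: "(-1::real) \<in> {-1, 1}" by auto
  define P where "P = {i. s i = 1}"
  define N where "N = {i. s i = -1}"
  have PN: "P \<inter> N = {}" by (auto simp: P_def N_def)
  have U: "P \<union> N = UNIV" using s_signs by (auto simp: P_def N_def)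
  have cPN: "card P = card N" using s_balanced by (simp add: P_def N_def)
  have "P \<noteq> {}"
  proof
    assume P0: "P = {}"
    hence "card N = 0" using cPN by simp
    hence "N = {}" by simp
    with P0 U show False by auto
  qed
  then obtain i0 where i0: "s i0 = 1" by (auto simp: P_def)
  obtain h where h: "bij_betw h P N" using finite_same_card_bij[of P N] cPN by auto
  define \<rho> where "\<rho> i = (if i \<in> P then h i else inv_into P h i)" for i
  have hN: "i \<in> P \<Longrightarrow> h i \<in> N" for i using h by (auto simp: bij_betw_def)
  have iP: "i \<in> N \<Longrightarrow> inv_into P h i \<in> P" for i using h
    by (metis bij_betw_def inv_into_into)
  have \<rho>\<rho>: "\<rho> (\<rho> i) = i" for i
  proof (cases "i \<in> P")
    case True
    then have "h i \<notin> P" using hN PN by auto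
    then show ?thesis using True h by (simp add: \<rho>_def bij_betw_def)
  next
    case False
    then have iN: "i \<in> N" using U by auto
    then show ?thesis using False iP h by (simp add: \<rho>_def bij_betw_def f_inv_into_f)
  qed
  have bij\<rho>: "bij \<rho>" by (rule o_bij[of \<rho> \<rho>]) (auto simp: \<rho>\<rho> fun_eq_iff)
  have s\<rho>: "s (\<rho> i) = (-1) * s i" for i
  proof (cases "i \<in> P")
    case True
    then show ?thesis using hN[OF True] by (simp add: \<rho>_def P_def N_def)
  next
    case False
    then have iN: "i \<in> N" using U by auto
    then show ?thesis using False iP[OF iN] by (simp add: \<rho>_def P_def N_def)
  qed
  have same: "x t i = x t i0" if t: "t \<ge> 0" and si: "s i = 1" for t i
  proof -
    define \<tau> where "\<tau> k = (if k = i then i0 else if k = i0 then i else k)" for k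
    have \<tau>\<tau>: "\<tau> (\<tau> k) = k" for k by (simp add: \<tau>_def)
    have bij\<tau>: "bij \<tau>" by (rule o_bij[of \<tau> \<tau>]) (auto simp: \<tau>\<tau> fun_eq_iff)
    have s\<tau>: "s (\<tau> k) = 1 * s k" for k using si i0 by (simp add: \<tau>_def)
    have "x t i = 1 *\<^sub>R x t (\<tau> i)"
      by (rule sym_consequence[where x=x and s=s and \<beta>=\<beta> and V=V and \<rho>=\<tau> and c=1,
            OF x_sphere x_ode x_init bij\<tau> c1 s\<tau> t])
    thus ?thesis by (simp add: \<tau>_def)
  qed
  have all: "x t i = s i *\<^sub>R x t i0" if t: "t \<ge> 0" for t i
  proof (cases "s i = 1")
    case True
    have "x t i = x t i0" by (rule same[OF t True])
    then show ?thesis using True by simp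
  next
    case False
    then have si: "s i = -1" using s_signs[of i] by auto
    have "x t i = (-1) *\<^sub>R x t (\<rho> i)"
      by (rule sym_consequence[where x=x and s=s and \<beta>=\<beta> and V=V and \<rho>=\<rho> and c="-1",
            OF x_sphere x_ode x_init bij\<rho> cm1 s\<rho> t])
    moreover have "s (\<rho> i) = 1" using s\<rho>[of i] si by simp
    ultimately have "x t i = (-1) *\<^sub>R x t i0" using same[of t "\<rho> i", OF t] by simp
    thus ?thesis using si by simp
  qed
  define u where "u t = x t i0" for t
  show ?thesis
  proof (intro exI conjI allI impI)
    fix t :: real assume t: "t \<ge> 0"
    show "norm (u t) = 1" unfolding u_def by (rule x_sphere[OF t])
    show "x t i = s i *\<^sub>R u t" for i unfolding u_def by (rule all[OF t])
  next
    fix k and t :: real assume t: "t \<ge> 0"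
    define M where "M = u t \<bullet> (V *v u t)"
    have xt: "x t = (\<lambda>j. s j *\<^sub>R u t)" unfolding u_def by (rule ext, rule all[OF t])
    have F: "attnField \<beta> V (x t) i0 = tanh (\<beta> * M) *\<^sub>R (V *v u t - M *\<^sub>R u t)"
      unfolding xt M_def
      by (rule field_bipolar[where s=s and q=i0, OF s_signs s_balanced i0]) (simp add: u_def x_sphere[OF t])
    have d: "((\<lambda>\<tau>. u \<tau>) has_vector_derivative attnField \<beta> V (x t) i0) (at t within {0..})"
      unfolding u_def by (rule x_ode[OF t])
    have d2: "((\<lambda>\<tau>. u \<tau> \<bullet> e k) has_vector_derivative (attnField \<beta> V (x t) i0) \<bullet> e k) (at t within {0..})"
      by (rule bounded_linear.has_vector_derivative[OF bounded_linear_inner_left d])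
    have val: "(attnField \<beta> V (x t) i0) \<bullet> e k = (u t \<bullet> e k) * tanh (\<beta> * M) * (lam k - M)"
      unfolding F using M_expand(1)[OF V_sym e_orthonormal e_eigen, of "u t" k]
      by (simp add: inner_diff_left algebra_simps)
    have Mx: "M = (\<Sum>l\<in>UNIV. lam l * (u t \<bullet> e l)^2)"
      unfolding M_def by (rule M_expand(2)[OF V_sym e_orthonormal e_eigen])
    show "((\<lambda>\<tau>. u \<tau> \<bullet> e k) has_real_derivative
                 (u t \<bullet> e k) * tanh (\<beta> * (\<Sum>l\<in>UNIV. lam l * (u t \<bullet> e l)^2))
                   * (lam k - (\<Sum>l\<in>UNIV. lam l * (u t \<bullet> e l)^2)))
              (at t within {0..})"
      using d2 unfolding val Mx[symmetric] has_real_derivative_iff_has_vector_derivative .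
  qed
qed

end
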